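(* Under the standing assumptions, suppose moreover that $R$ is a Hirata separable extension of $R^\beta$. Then for all $g,h\in\mathcal G$ with $d(g)=r(h)$ one has $J_hJ_g=J_{gh}$ (where $J_hJ_g$ denotes the additive subgroup generated by all products $ab$ with $a\in J_h$, $b\in J_g$). In particular, $J_{g^{-1}}J_g=V_{E_g}(R)=\{r\in E_g: rx=xr\ \forall x\in R\}$ and $J_g\neq\{0\}$ for every $g\in\mathcal G$.
   Context: All rings and algebras are associative and unital. A groupoid is a nonempty set $\mathcal G$ with a partially defined associative multiplication in which every $g$ has an inverse $g^{-1}$, a left identity $r(g)=gg^{-1}$ and a right identity $d(g)=g^{-1}g$; $gh$ is defined iff $d(g)=r(h)$; $\mathcal G_0$ is the set of identities. Standing assumptions: $K$ commutative ring, $R$ a $K$-algebra, $\mathcal G$ a finite groupoid, $\beta=(\{E_g\},\{\beta_g\})$ a unital action of $\mathcal G$ on $R$: $E_g=E_{r(g)}$ is an ideal of $R$, unital with identity $1_g$ (so $1_{g^{-1}}=1_{d(g)}$), $\beta_g:E_{g^{-1}}\to E_g$ a $K$-algebra isomorphism, $\beta_e=\mathrm{id}_{E_e}$ for $e\in\mathcal G_0$, $\beta_g\beta_h(x)=\beta_{gh}(x)$ whenever $d(g)=r(h)$, $x\in E_{h^{-1}}$; $R=\bigoplus_{e\in\mathcal G_0}E_e$; and $R$ is a $\beta$-Galois extension of $R^\beta=\{r\in R:\beta_g(r1_{g^{-1}})=r1_g\ \forall g\in\mathcal G\}$: there exist $x_i,y_i\in R$ ($1\le i\le m$) with $\sum_i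 x_i\beta_g(y_i1_{g^{-1}})=1_g$ if $g\in\mathcal G_0$ and $=0$ otherwise. For $g\in\mathcal G$, $J_g=\{r\in E_g: r\beta_g(x1_{g^{-1}})=xr\ \forall x\in R\}$. A ring extension $R\supseteq S$ is Hirata separable if $R\otimes_S R$ is isomorphic, as an $R$-$R$-bimodule, to a direct summand of a finite direct sum of copies of $R$. *)

theory Defs
  imports Main
begin

text \<open>A groupoid is given by a carrier G, a (total HOL) function mul which is only
  meaningful on pairs (g,h) with d(g) = r(h), and an inverse map.\<close>

definition gdom :: "('g \<Rightarrow> 'g \<Rightarrow> 'g) \<Rightarrow> ('g \<Rightarrow> 'g) \<Rightarrow> 'g \<Rightarrow> 'g" where
  "gdom mul iv g = mul (iv g) g"

definition gran :: "('g \<Rightarrow> 'g \<Rightarrow> 'g) \<Rightarrow> ('g \<Rightarrow> 'g) \<Rightarrow> 'g \<Rightarrow> 'g" where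
  "gran mul iv g = mul g (iv g)"

definition groupoid :: "'g set \<Rightarrow> ('g \<Rightarrow> 'g \<Rightarrow> 'g) \<Rightarrow> ('g \<Rightarrow> 'g) \<Rightarrow> bool" where
  "groupoid G mul iv \<longleftrightarrow>
     G \<noteq> {} \<and>
     (\<forall>g\<in>G. iv g \<in> G \<and> iv (iv g) = g) \<and>
     (\<forall>g\<in>G. \<forall>h\<in>G. gdom mul iv g = gran mul iv h \<longrightarrow>
        mul g h \<in> G \<and> gdom mul iv (mul g h) = gdom mul iv h \<and>
        gran mul iv (mul g h) = gran mul iv g) \<and>
     (\<forall>g\<in>G. \<forall>h\<in>G. \<forall>l\<in>G. gdom mul iv g = gran mul iv h \<longrightarrow>
        gdom mul iv h = gran mul iv l \<longrightarrow> mul (mul g h) l = mul g (mul h l)) \<and>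
     (\<forall>g\<in>G. mul (gran mul iv g) g = g \<and> mul g (gdom mul iv g) = g)"

definition gidents :: "'g set \<Rightarrow> ('g \<Rightarrow> 'g \<Rightarrow> 'g) \<Rightarrow> ('g \<Rightarrow> 'g) \<Rightarrow> 'g set" where
  "gidents G mul iv = gdom mul iv ` G"

definition is_ideal :: "('r::ring_1) set \<Rightarrow> bool" where
  "is_ideal I \<longleftrightarrow> 0 \<in> I \<and> (\<forall>x\<in>I. \<forall>y\<in>I. x + y \<in> I) \<and> (\<forall>x\<in>I. - x \<in> I) \<and>
     (\<forall>x\<in>I. \<forall>r. r * x \<in> I \<and> x * r \<in> I)"

text \<open>E g is the ideal E_g, u g its identity 1_g, beta g the isomorphism
  E_{g^{-1}} to E_g. The whole ring R is the type 'r.\<close>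
definition unital_action ::
  "'g set \<Rightarrow> ('g \<Rightarrow> 'g \<Rightarrow> 'g) \<Rightarrow> ('g \<Rightarrow> 'g) \<Rightarrow> ('g \<Rightarrow> ('r::ring_1) set) \<Rightarrow> ('g \<Rightarrow> 'r)
     \<Rightarrow> ('g \<Rightarrow> 'r \<Rightarrow> 'r) \<Rightarrow> bool" where
  "unital_action G mul iv E u beta \<longleftrightarrow>
     (\<forall>g\<in>G. E g = E (gran mul iv g)) \<and>
     (\<forall>g\<in>G. is_ideal (E g) \<and> u g \<in> E g \<and> (\<forall>x\<in>E g. u g * x = x \<and> x * u g = x)) \<and>
     (\<forall>g\<in>G. bij_betw (beta g) (E (iv g)) (E g) \<and>
        (\<forall>x\<in>E (iv g). \<forall>y\<in>E (iv g).
           beta g (x + y) = beta g x + beta g y \<and> beta g (x * y) = beta g x * beta g y)) \<and>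
     (\<forall>e\<in>gidents G mul iv. \<forall>x\<in>E e. beta e x = x) \<and>
     (\<forall>g\<in>G. \<forall>h\<in>G. gdom mul iv g = gran mul iv h \<longrightarrow>
        (\<forall>x\<in>E (iv h). beta g (beta h x) = beta (mul g h) x)) \<and>
     \<comment> \<open>R is the internal direct sum of the E_e, e in G_0\<close>
     (\<forall>x::'r. \<exists>f. (\<forall>e\<in>gidents G mul iv. f e \<in> E e) \<and> x = (\<Sum>e\<in>gidents G mul iv. f e)) \<and>
     (\<forall>f. (\<forall>e\<in>gidents G mul iv. f e \<in> E e) \<and> (\<Sum>e\<in>gidents G mul iv. f e) = 0 \<longrightarrow>
        (\<forall>e\<in>gidents G mul iv. f e = 0))"

definition fixed_ring ::
  "'g set \<Rightarrow> ('g \<Rightarrow> 'g) \<Rightarrow> ('g \<Rightarrow> ('r::ring_1)) \<Rightarrow> ('g \<Rightarrow> 'r \<Rightarrow> 'r) \<Rightarrow> 'r set" where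
  "fixed_ring G iv u beta = {r. \<forall>g\<in>G. beta g (r * u (iv g)) = r * u g}"

definition beta_galois ::
  "'g set \<Rightarrow> ('g \<Rightarrow> 'g \<Rightarrow> 'g) \<Rightarrow> ('g \<Rightarrow> 'g) \<Rightarrow> ('g \<Rightarrow> ('r::ring_1)) \<Rightarrow> ('g \<Rightarrow> 'r \<Rightarrow> 'r) \<Rightarrow> bool" where
  "beta_galois G mul iv u beta \<longleftrightarrow>
     (\<exists>(m::nat) (xs::nat \<Rightarrow> 'r) (ys::nat \<Rightarrow> 'r). \<forall>g\<in>G.
        (\<Sum>i<m. xs i * beta g (ys i * u (iv g))) =
          (if g \<in> gidents G mul iv then u g else 0))"

definition Jset ::
  "('g \<Rightarrow> 'g) \<Rightarrow> ('g \<Rightarrow> ('r::ring_1) set) \<Rightarrow> ('g \<Rightarrow> 'r) \<Rightarrow> ('g \<Rightarrow> 'r \<Rightarrow> 'r) \<Rightarrow> 'g \<Rightarrow> 'r set" where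
  "Jset iv E u beta g = {r\<in>E g. \<forall>x. r * beta g (x * u (iv g)) = x * r}"

inductive_set set_prod :: "('r::ring_1) set \<Rightarrow> 'r set \<Rightarrow> 'r set" for A B where
  zero: "0 \<in> set_prod A B"
| prod: "a \<in> A \<Longrightarrow> b \<in> B \<Longrightarrow> a * b \<in> set_prod A B"
| add: "x \<in> set_prod A B \<Longrightarrow> y \<in> set_prod A B \<Longrightarrow> x + y \<in> set_prod A B"
| neg: "x \<in> set_prod A B \<Longrightarrow> - x \<in> set_prod A B"

text \<open>Elements of R \<otimes>_S R are represented by lists of pairs (formal sums of
  simple tensors x \<otimes> y); tens_eq S is the congruence presenting R \<otimes>_S R
  (as a quotient of the free commutative monoid on R \<times> R; the quotient is an
  abelian group since (-x)\<otimes>y is inverse to x\<otimes>y).\<close>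
inductive tens_eq :: "('r::ring_1) set \<Rightarrow> ('r \<times> 'r) list \<Rightarrow> ('r \<times> 'r) list \<Rightarrow> bool"
  for S where
  refl: "tens_eq S xs xs"
| sym: "tens_eq S xs ys \<Longrightarrow> tens_eq S ys xs"
| trans: "tens_eq S xs ys \<Longrightarrow> tens_eq S ys zs \<Longrightarrow> tens_eq S xs zs"
| cong: "tens_eq S xs ys \<Longrightarrow> tens_eq S (us @ xs @ vs) (us @ ys @ vs)"
| comm: "tens_eq S [p, q] [q, p]"
| zero: "tens_eq S [(0, y)] []"
| addl: "tens_eq S [(x + x', y)] [(x, y), (x', y)]"
| addr: "tens_eq S [(x, y + y')] [(x, y), (x, y')]"
| bal: "s \<in> S \<Longrightarrow> tens_eq S [(x * s, y)] [(x, s * y)]"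

definition tens_lact :: "('r::ring_1) \<Rightarrow> ('r \<times> 'r) list \<Rightarrow> ('r \<times> 'r) list" where
  "tens_lact a xs = map (\<lambda>(x, y). (a * x, y)) xs"

definition tens_ract :: "('r \<times> 'r) list \<Rightarrow> ('r::ring_1) \<Rightarrow> ('r \<times> 'r) list" where
  "tens_ract xs b = map (\<lambda>(x, y). (x, y * b)) xs"

text \<open>Elements of R^n: functions nat \<Rightarrow> R vanishing from index n on.\<close>
definition vec_in :: "nat \<Rightarrow> (nat \<Rightarrow> 'r::zero) \<Rightarrow> bool" where
  "vec_in n v \<longleftrightarrow> (\<forall>i\<ge>n. v i = 0)"

text \<open>R \<supseteq> S is Hirata separable iff R \<otimes>_S R is R-R-bimodule isomorphic to a
  direct summand of some R^n, i.e. there is an R-R-bimodule map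
  Phi : R \<otimes>_S R \<rightarrow> R^n with an R-R-bimodule left inverse Psi : R^n \<rightarrow> R \<otimes>_S R.\<close>
definition hirata_separable :: "('r::ring_1) set \<Rightarrow> bool" where
  "hirata_separable S \<longleftrightarrow>
    (\<exists>(n::nat) (Phi :: ('r \<times> 'r) list \<Rightarrow> nat \<Rightarrow> 'r) (Psi :: (nat \<Rightarrow> 'r) \<Rightarrow> ('r \<times> 'r) list).
       (\<forall>xs ys. tens_eq S xs ys \<longrightarrow> Phi xs = Phi ys) \<and>
       (\<forall>xs. vec_in n (Phi xs)) \<and>
       (\<forall>xs ys. Phi (xs @ ys) = (\<lambda>i. Phi xs i + Phi ys i)) \<and>
       (\<forall>a xs. Phi (tens_lact a xs) = (\<lambda>i. a * Phi xs i)) \<and>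
       (\<forall>b xs. Phi (tens_ract xs b) = (\<lambda>i. Phi xs i * b)) \<and>
       (\<forall>v w. vec_in n v \<longrightarrow> vec_in n w \<longrightarrow>
          tens_eq S (Psi (\<lambda>i. v i + w i)) (Psi v @ Psi w)) \<and>
       (\<forall>a v. vec_in n v \<longrightarrow> tens_eq S (Psi (\<lambda>i. a * v i)) (tens_lact a (Psi v))) \<and>
       (\<forall>b v. vec_in n v \<longrightarrow> tens_eq S (Psi (\<lambda>i. v i * b)) (tens_ract (Psi v) b)) \<and>
       (\<forall>xs. tens_eq S (Psi (Phi xs)) xs))"

end

theory Submission
  imports Defs
begin

locale gs =
  fixes G :: "'g set" and mul :: "'g \<Rightarrow> 'g \<Rightarrow> 'g" and iv :: "'g \<Rightarrow> 'g"
    and E :: "'g \<Rightarrow> ('r::ring_1) set" and u :: "'g \<Rightarrow> 'r" and beta :: "'g \<Rightarrow> 'r \<Rightarrow> 'r"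
  assumes grp: "groupoid G mul iv" and fin: "finite G"
    and act: "unital_action G mul iv E u beta"
    and unz: "\<forall>g\<in>G. u g \<noteq> 0"
begin

abbreviation dm where "dm \<equiv> gdom mul iv"
abbreviation rn where "rn \<equiv> gran mul iv"
abbreviation G0 where "G0 \<equiv> gidents G mul iv"

lemma iv_G: "g \<in> G \<Longrightarrow> iv g \<in> G" and iv_iv: "g \<in> G \<Longrightarrow> iv (iv g) = g"
  using grp unfolding groupoid_def by auto

lemma mul_G: "g \<in> G \<Longrightarrow> h \<in> G \<Longrightarrow> dm g = rn h \<Longrightarrow> mul g h \<in> G"
  and dm_mul: "g \<in> G \<Longrightarrow> h \<in> G \<Longrightarrow> dm g = rn h \<Longrightarrow> dm (mul g h) = dm h"
  and rn_mul: "g \<in> G \<Longrightarrow> h \<in> G \<Longrightarrow> dm g = rn h \<Longrightarrow> rn (mul g h) = rn g"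
  using grp unfolding groupoid_def by blast+

lemma assoc: "g \<in> G \<Longrightarrow> h \<in> G \<Longrightarrow> l \<in> G \<Longrightarrow> dm g = rn h \<Longrightarrow> dm h = rn l \<Longrightarrow>
   mul (mul g h) l = mul g (mul h l)"
  using grp unfolding groupoid_def by blast

lemma lid: "g \<in> G \<Longrightarrow> mul (rn g) g = g" and rid: "g \<in> G \<Longrightarrow> mul g (dm g) = g"
  using grp unfolding groupoid_def by blast+

lemma dm_iv: "g \<in> G \<Longrightarrow> dm (iv g) = rn g"
  by (simp add: gdom_def gran_def iv_iv)
lemma rn_iv: "g \<in> G \<Longrightarrow> rn (iv g) = dm g"
  by (simp add: gdom_def gran_def iv_iv)
lemma dm_G: "g \<in> G \<Longrightarrow> dm g \<in> G"
  unfolding gdom_def[of mul iv g] using mul_G[of "iv g" g] iv_G dm_iv rn_iv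
  by (metis gdom_def gran_def iv_iv)
lemma rn_G: "g \<in> G \<Longrightarrow> rn g \<in> G"
  by (metis dm_G dm_iv iv_G)

lemma G0_G: "e \<in> G0 \<Longrightarrow> e \<in> G"
  unfolding gidents_def using dm_G by auto

lemma G0_props: assumes "e \<in> G0" shows "dm e = e" "rn e = e" "iv e = e"
proof -
  obtain h where h: "h \<in> G" "e = dm h" using assms unfolding gidents_def by auto
  have c: "dm (iv h) = rn h" using dm_iv h by simp
  have e: "e = mul (iv h) h" using h by (simp add: gdom_def)
  have 1: "dm e = e" using dm_mul[OF iv_G[OF h(1)] h(1)] c e h by simp
  have 2: "rn e = e" using rn_mul[OF iv_G[OF h(1)] h(1)] c e h rn_iv by simp
  have eG: "e \<in> G" using h dm_G by simp
  have "rn (iv e) = e" using rn_iv[OF eG] 1 by simp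
  hence "iv e = mul e (iv e)" using lid[OF iv_G[OF eG]] by simp
  also have "\<dots> = e" using 2 by (simp add: gran_def)
  finally show "dm e = e" "rn e = e" "iv e = e" using 1 2 by auto
qed

lemma rn_G0: "g \<in> G \<Longrightarrow> rn g \<in> G0"
  unfolding gidents_def using dm_iv iv_G by (metis image_eqI)
lemma dm_G0: "g \<in> G \<Longrightarrow> dm g \<in> G0"
  unfolding gidents_def by auto


lemma act_parts:
  "\<forall>g\<in>G. E g = E (rn g)"
  "\<forall>g\<in>G. is_ideal (E g) \<and> u g \<in> E g \<and> (\<forall>x\<in>E g. u g * x = x \<and> x * u g = x)"
  "\<forall>g\<in>G. bij_betw (beta g) (E (iv g)) (E g) \<and>
        (\<forall>x\<in>E (iv g). \<forall>y\<in>E (iv g).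
           beta g (x + y) = beta g x + beta g y \<and> beta g (x * y) = beta g x * beta g y)"
  "\<forall>e\<in>G0. \<forall>x\<in>E e. beta e x = x"
  "\<forall>g\<in>G. \<forall>h\<in>G. dm g = rn h \<longrightarrow>
        (\<forall>x\<in>E (iv h). beta g (beta h x) = beta (mul g h) x)"
  "\<forall>x::'r. \<exists>f. (\<forall>e\<in>G0. f e \<in> E e) \<and> x = (\<Sum>e\<in>G0. f e)"
  "\<forall>f. (\<forall>e\<in>G0. f e \<in> E e) \<and> (\<Sum>e\<in>G0. f e) = 0 \<longrightarrow>
        (\<forall>e\<in>G0. f e = 0)"
  using act unfolding unital_action_def apply - by (elim conjE, assumption)+

lemma E_rn: "g \<in> G \<Longrightarrow> E g = E (rn g)" using act_parts(1) by blast
lemma ideal: "g \<in> G \<Longrightarrow> is_ideal (E g)" using act_parts(2) by blast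
lemma u_E: "g \<in> G \<Longrightarrow> u g \<in> E g" using act_parts(2) by blast
lemma u_l: "g \<in> G \<Longrightarrow> x \<in> E g \<Longrightarrow> u g * x = x" using act_parts(2) by blast
lemma u_r: "g \<in> G \<Longrightarrow> x \<in> E g \<Longrightarrow> x * u g = x" using act_parts(2) by blast
lemma b_bij: "g \<in> G \<Longrightarrow> bij_betw (beta g) (E (iv g)) (E g)" using act_parts(3) by blast
lemma b_add: "g \<in> G \<Longrightarrow> x \<in> E (iv g) \<Longrightarrow> y \<in> E (iv g) \<Longrightarrow> beta g (x + y) = beta g x + beta g y"
  using act_parts(3) by blast
lemma b_mult: "g \<in> G \<Longrightarrow> x \<in> E (iv g) \<Longrightarrow> y \<in> E (iv g) \<Longrightarrow> beta g (x * y) = beta g x * beta g y"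
  using act_parts(3) by blast
lemma b_id: "e \<in> G0 \<Longrightarrow> x \<in> E e \<Longrightarrow> beta e x = x" using act_parts(4) by blast
lemma b_comp: "g \<in> G \<Longrightarrow> h \<in> G \<Longrightarrow> dm g = rn h \<Longrightarrow> x \<in> E (iv h) \<Longrightarrow> beta g (beta h x) = beta (mul g h) x"
  using act_parts(5) by blast
lemma dsum_ex: "\<exists>f. (\<forall>e\<in>G0. f e \<in> E e) \<and> x = (\<Sum>e\<in>G0. f e)" using act_parts(6) by blast
lemma dsum_uniq: "(\<forall>e\<in>G0. f e \<in> E e) \<Longrightarrow> (\<Sum>e\<in>G0. f e) = 0 \<Longrightarrow> e \<in> G0 \<Longrightarrow> f e = 0"
  using act_parts(7) by blast

lemma id_in: "g \<in> G \<Longrightarrow> x \<in> E g \<Longrightarrow> x * r \<in> E g" "g \<in> G \<Longrightarrow> x \<in> E g \<Longrightarrow> r * x \<in> E g"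
  "g \<in> G \<Longrightarrow> x \<in> E g \<Longrightarrow> y \<in> E g \<Longrightarrow> x + y \<in> E g"
  "g \<in> G \<Longrightarrow> x \<in> E g \<Longrightarrow> - x \<in> E g" "g \<in> G \<Longrightarrow> 0 \<in> E g"
  using ideal unfolding is_ideal_def by blast+

lemma id_sum: "g \<in> G \<Longrightarrow> (\<And>i. i \<in> A \<Longrightarrow> f i \<in> E g) \<Longrightarrow> sum f A \<in> E g"
  by (induction A rule: infinite_finite_induct) (auto intro: id_in)

lemma id_diff: "g \<in> G \<Longrightarrow> x \<in> E g \<Longrightarrow> y \<in> E g \<Longrightarrow> x - y \<in> E g"
  using id_in(3)[of g x "-y"] id_in(4)[of g y] by simp

lemma u_unique: "g \<in> G \<Longrightarrow> h \<in> G \<Longrightarrow> E g = E h \<Longrightarrow> u g = u h"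
proof -
  assume a: "g \<in> G" "h \<in> G" "E g = E h"
  have "u g * u h = u h" using u_l[OF a(1)] u_E[OF a(2)] a(3) by simp
  moreover have "u g * u h = u g" using u_r[OF a(2)] u_E[OF a(1)] a(3) by simp
  ultimately show ?thesis by simp
qed

lemma u_central: "g \<in> G \<Longrightarrow> x * u g = u g * x"
proof -
  assume g: "g \<in> G"
  have "u g * (x * u g) = x * u g" using u_l[OF g] id_in(2)[OF g u_E[OF g]] by simp
  moreover have "(u g * x) * u g = u g * x" using u_r[OF g] id_in(1)[OF g u_E[OF g]] by simp
  ultimately show ?thesis by (metis mult.assoc)
qed

lemma u_idem: "g \<in> G \<Longrightarrow> u g * u g = u g"
  using u_E u_l by blast

lemma E_iv: "g \<in> G \<Longrightarrow> E (iv g) = E (dm g)"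
  using E_rn[OF iv_G] rn_iv by simp

lemma u_rn: "g \<in> G \<Longrightarrow> u g = u (rn g)"
  using E_rn rn_G u_unique by blast
lemma u_iv: "g \<in> G \<Longrightarrow> u (iv g) = u (dm g)"
  using E_iv dm_G iv_G u_unique by blast

lemma orth: assumes "e \<in> G0" "e' \<in> G0" "e \<noteq> e'" "x \<in> E e" "x \<in> E e'" shows "x = 0"
proof -
  define f where "f = (\<lambda>k. if k = e then x else if k = e' then - x else 0)"
  have fE: "\<forall>k\<in>G0. f k \<in> E k"
  proof
    fix k assume k: "k \<in> G0"
    show "f k \<in> E k"
      using assms id_in(4)[OF G0_G[OF assms(2)] assms(5)] id_in(5)[OF G0_G[OF k]] unfolding f_def by simp
  qed
  have fin0: "finite G0" unfolding gidents_def using fin by simp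
  have "(\<Sum>k\<in>G0. f k) = (\<Sum>k\<in>{e,e'}. f k)"
  proof (rule sum.mono_neutral_right)
    show "finite G0" by (rule fin0)
    show "{e, e'} \<subseteq> G0" using assms by simp
    show "\<forall>i\<in>G0 - {e, e'}. f i = 0" unfolding f_def by simp
  qed
  also have "\<dots> = 0" using assms by (simp add: f_def)
  finally have "f e = 0" using dsum_uniq[OF fE] assms by blast
  thus ?thesis by (simp add: f_def)
qed

lemma fin0: "finite G0" unfolding gidents_def using fin by simp

lemma u_orth: "e \<in> G0 \<Longrightarrow> e' \<in> G0 \<Longrightarrow> e \<noteq> e' \<Longrightarrow> u e * u e' = 0"
proof -
  assume a: "e \<in> G0" "e' \<in> G0" "e \<noteq> e'"
  show ?thesis
    by (rule orth[OF a]) (use a G0_G id_in(1,2) u_E in blast)+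
qed

lemma sum_u: "(\<Sum>e\<in>G0. u e) = 1"
proof -
  obtain f where f: "\<forall>e\<in>G0. f e \<in> E e" "1 = (\<Sum>e\<in>G0. f e)" using dsum_ex by blast
  have "\<And>e. e \<in> G0 \<Longrightarrow> u e = f e"
  proof -
    fix e assume e: "e \<in> G0"
    have "u e = u e * (\<Sum>k\<in>G0. f k)" using f by simp
    also have "\<dots> = (\<Sum>k\<in>G0. u e * f k)" by (simp add: sum_distrib_left)
    also have "\<dots> = u e * f e"
    proof (rule sum.mono_neutral_right[of G0 "{e}", simplified])
      show "finite G0" by (rule fin0)
      show "e \<in> G0" by fact
      show "\<forall>i\<in>G0 - {e}. u e * f i = 0"
      proof
        fix i assume i: "i \<in> G0 - {e}"
        have i0: "i \<in> G0" "i \<noteq> e" using i by auto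
        have a: "u e * f i \<in> E e" using id_in(1)[OF G0_G[OF e] u_E[OF G0_G[OF e]]] by blast
        have b: "u e * f i \<in> E i" using id_in(2)[OF G0_G[OF i0(1)]] f(1) i0(1) by blast
        show "u e * f i = 0" using orth[OF e i0(1) i0(2)[symmetric] a b] .
      qed
    qed
    also have "\<dots> = f e" using u_l[OF G0_G[OF e]] f e by simp
    finally show "u e = f e" .
  qed
  thus ?thesis using f by simp
qed


lemma E_orth: "k \<in> G \<Longrightarrow> h \<in> G \<Longrightarrow> rn k \<noteq> rn h \<Longrightarrow> x \<in> E k \<Longrightarrow> y \<in> E h \<Longrightarrow> x * y = 0"
  by (rule orth[of "rn k" "rn h"]) (auto simp: rn_G0 E_rn[symmetric] intro: id_in)

definition bt where "bt g x = beta g (x * u (iv g))"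

lemma bt_E: "g \<in> G \<Longrightarrow> bt g x \<in> E g"
  unfolding bt_def using b_bij[of g] id_in(2)[OF iv_G u_E[OF iv_G]]
  by (meson bij_betw_apply)

lemma mu_E: "g \<in> G \<Longrightarrow> x * u (iv g) \<in> E (iv g)"
  using id_in(2)[OF iv_G u_E[OF iv_G]] by blast

lemma bt_add: "g \<in> G \<Longrightarrow> bt g (x + y) = bt g x + bt g y"
  unfolding bt_def by (simp add: distrib_right b_add mu_E)

lemma split_u: "g \<in> G \<Longrightarrow> (x * y) * u g = (x * u g) * (y * u g)"
proof -
  assume g: "g \<in> G"
  have "(x * u g) * (y * u g) = x * (u g * y) * u g" by (simp add: mult.assoc)
  also have "\<dots> = x * (y * u g) * u g" using u_central[OF g, of y] by simp
  also have "\<dots> = x * y * (u g * u g)" by (simp add: mult.assoc)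
  also have "\<dots> = x * y * u g" by (simp add: u_idem[OF g])
  finally show ?thesis by simp
qed

lemma bt_mult: "g \<in> G \<Longrightarrow> bt g (x * y) = bt g x * bt g y"
  unfolding bt_def using split_u[OF iv_G] b_mult mu_E by metis

lemma bt_0: "g \<in> G \<Longrightarrow> bt g 0 = 0"
  using bt_add[of g 0 0] by simp

lemma bt_neg: "g \<in> G \<Longrightarrow> bt g (- x) = - bt g x"
proof -
  assume g: "g \<in> G"
  have "bt g x + bt g (- x) = 0" using bt_add[OF g, of x "-x"] bt_0[OF g] by simp
  thus ?thesis by (metis minus_unique)
qed

lemma bt_sum: "g \<in> G \<Longrightarrow> bt g (sum f A) = (\<Sum>a\<in>A. bt g (f a))"
  by (induction A rule: infinite_finite_induct) (auto simp: bt_0 bt_add)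

lemma bt_on: "g \<in> G \<Longrightarrow> y \<in> E (iv g) \<Longrightarrow> bt g y = beta g y"
  unfolding bt_def using u_r[OF iv_G] by simp

lemma bt_1: "g \<in> G \<Longrightarrow> bt g 1 = u g"
proof -
  assume g: "g \<in> G"
  have "bt g 1 * u g = u g"
  proof -
    obtain y where y: "y \<in> E (iv g)" "u g = beta g y"
      using b_bij[OF g] u_E[OF g] by (metis bij_betw_imp_surj_on imageE)
    have "bt g 1 * u g = beta g (u (iv g) * y)"
      unfolding bt_def using b_mult[OF g u_E[OF iv_G[OF g]] y(1)] y by simp
    also have "\<dots> = u g" using u_l[OF iv_G[OF g] y(1)] y by simp
    finally show ?thesis .
  qed
  moreover have "bt g 1 * u g = bt g 1" using u_r[OF g bt_E[OF g]] .
  ultimately show ?thesis by simp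
qed

lemma bt_G0: "e \<in> G0 \<Longrightarrow> bt e x = x * u e"
  unfolding bt_def using G0_props[of e] b_id[of e] id_in(2)[OF G0_G u_E[OF G0_G]] by simp

lemma bt_comp: "g \<in> G \<Longrightarrow> h \<in> G \<Longrightarrow> dm g = rn h \<Longrightarrow> bt g (bt h x) = bt (mul g h) x"
proof -
  assume g: "g \<in> G" and h: "h \<in> G" and gh: "dm g = rn h"
  have "bt h x \<in> E (iv g)" using bt_E[OF h] E_rn[OF h] E_iv[OF g] gh by simp
  hence "bt g (bt h x) = beta g (beta h (x * u (iv h)))" using bt_on[OF g] by (simp add: bt_def)
  also have "\<dots> = beta (mul g h) (x * u (iv h))" using b_comp[OF g h gh mu_E[OF h]] .
  also have "u (iv h) = u (iv (mul g h))"
    using u_iv[OF h] u_iv[OF mul_G[OF g h gh]] dm_mul[OF g h gh] by simp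
  finally show ?thesis by (simp add: bt_def)
qed

lemma bt_inv: "g \<in> G \<Longrightarrow> bt g (bt (iv g) y) = y * u g"
proof -
  assume g: "g \<in> G"
  have "bt g (bt (iv g) y) = bt (mul g (iv g)) y"
    using bt_comp[OF g iv_G[OF g]] rn_iv[OF g] by simp
  also have "\<dots> = y * u (rn g)" using bt_G0[OF rn_G0[OF g]] by (simp add: gran_def)
  finally show ?thesis using u_rn[OF g] by simp
qed

lemma G0_sub: "G0 \<subseteq> G" using G0_G by blast

lemma sum_G0: "(\<Sum>k\<in>G. if k \<in> G0 then f k else 0) = (\<Sum>k\<in>G0. f k)"
  using sum.inter_restrict[OF fin, of f G0] G0_sub by (simp add: Int_absorb1)

lemma sum_G0_u: "(\<Sum>k\<in>G0. z * u k) = z"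
  using sum_u by (simp add: sum_distrib_left[symmetric])

definition tr where "tr z = (\<Sum>k\<in>G. bt k z)"

lemma bt_bt: "h \<in> G \<Longrightarrow> k \<in> G \<Longrightarrow> bt h (bt k z) = (if rn k = dm h then bt (mul h k) z else 0)"
proof -
  assume h: "h \<in> G" and k: "k \<in> G"
  show ?thesis
  proof (cases "rn k = dm h")
    case True
    then show ?thesis using bt_comp[OF h k] by simp
  next
    case False
    have "bt k z * u (iv h) = 0"
      by (rule E_orth[OF k iv_G[OF h]]) (use False rn_iv[OF h] bt_E[OF k] u_E[OF iv_G[OF h]] in auto)
    hence "bt h (bt k z) = beta h 0" by (simp add: bt_def)
    also have "\<dots> = 0" using bt_0[OF h] by (simp add: bt_def)
    finally show ?thesis using False by simp
  qed
qed

lemma bt_u: "h \<in> G \<Longrightarrow> k \<in> G \<Longrightarrow> bt k z * u h = (if rn k = rn h then bt k z else 0)"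
proof -
  assume h: "h \<in> G" and k: "k \<in> G"
  show ?thesis
  proof (cases "rn k = rn h")
    case True
    have "u h = u k" using u_rn[OF h] u_rn[OF k] True by simp
    then show ?thesis using True u_r[OF k bt_E[OF k]] by simp
  next
    case False
    then show ?thesis using E_orth[OF k h False bt_E[OF k] u_E[OF h]] by simp
  qed
qed

lemma tr_S: "tr z \<in> fixed_ring G iv u beta"
proof -
  have "bt h (tr z) = tr z * u h" if h: "h \<in> G" for h
  proof -
    have "bt h (tr z) = (\<Sum>k\<in>G. if rn k = dm h then bt (mul h k) z else 0)"
      unfolding tr_def bt_sum[OF h] by (rule sum.cong) (simp_all add: bt_bt[OF h])
    also have "\<dots> = (\<Sum>k\<in>{k\<in>G. rn k = dm h}. bt (mul h k) z)"
      by (rule sum.inter_filter[OF fin, symmetric])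
    also have "\<dots> = (\<Sum>k\<in>{k\<in>G. rn k = rn h}. bt k z)"
    proof (rule sum.reindex_bij_witness[where i = "\<lambda>k. mul (iv h) k" and j = "\<lambda>k. mul h k"])
      fix a assume a: "a \<in> {k\<in>G. rn k = dm h}"
      hence aG: "a \<in> G" and ra: "rn a = dm h" by auto
      have "mul (iv h) (mul h a) = mul (mul (iv h) h) a"
        using assoc[OF iv_G[OF h] h aG] dm_iv[OF h] ra by simp
      also have "\<dots> = mul (rn a) a" using ra by (simp add: gdom_def)
      also have "\<dots> = a" using lid[OF aG] .
      finally show "mul (iv h) (mul h a) = a" .
      show "mul h a \<in> {k\<in>G. rn k = rn h}" using mul_G[OF h aG] rn_mul[OF h aG] ra by simp
      show "bt (mul h a) z = bt (mul h a) z" ..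
    next
      fix b assume b: "b \<in> {k\<in>G. rn k = rn h}"
      hence bG: "b \<in> G" and rb: "rn b = rn h" by auto
      have c: "dm (iv h) = rn b" using dm_iv[OF h] rb by simp
      have "mul h (mul (iv h) b) = mul (mul h (iv h)) b"
        using assoc[OF h iv_G[OF h] bG] rn_iv[OF h] c by simp
      also have "\<dots> = mul (rn b) b" using rb by (simp add: gran_def)
      also have "\<dots> = b" using lid[OF bG] .
      finally show "mul h (mul (iv h) b) = b" .
      show "mul (iv h) b \<in> {k\<in>G. rn k = dm h}"
        using mul_G[OF iv_G[OF h] bG c] rn_mul[OF iv_G[OF h] bG c] rn_iv[OF h] by simp
    qed
    also have "\<dots> = (\<Sum>k\<in>G. if rn k = rn h then bt k z else 0)"
      by (rule sum.inter_filter[OF fin])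
    also have "\<dots> = tr z * u h"
      unfolding tr_def using bt_u[OF h] by (simp add: sum_distrib_right)
    finally show ?thesis .
  qed
  thus ?thesis unfolding fixed_ring_def bt_def by blast
qed

lemma bt_S: "g \<in> G \<Longrightarrow> s \<in> fixed_ring G iv u beta \<Longrightarrow> bt g s = s * u g"
  unfolding fixed_ring_def bt_def by blast

end

locale gal = gs G mul iv E u beta for G :: "'g set" and mul iv and E :: "'g \<Rightarrow> ('r::ring_1) set" and u beta +
  fixes m :: nat and xs ys :: "nat \<Rightarrow> 'r"
  assumes galois: "\<forall>g\<in>G. (\<Sum>i<m. xs i * beta g (ys i * u (iv g))) = (if g \<in> G0 then u g else 0)"
begin

lemma gal_bt: "g \<in> G \<Longrightarrow> (\<Sum>i<m. xs i * bt g (ys i)) = (if g \<in> G0 then u g else 0)"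
  using galois unfolding bt_def by blast

lemma D1: "(\<Sum>j<m. xs j * tr (ys j * z)) = z"
proof -
  have "(\<Sum>j<m. xs j * tr (ys j * z)) = (\<Sum>j<m. \<Sum>k\<in>G. xs j * bt k (ys j) * bt k z)"
    unfolding tr_def by (simp add: sum_distrib_left bt_mult mult.assoc)
  also have "\<dots> = (\<Sum>k\<in>G. \<Sum>j<m. xs j * bt k (ys j) * bt k z)" by (rule sum.swap)
  also have "\<dots> = (\<Sum>k\<in>G. (\<Sum>j<m. xs j * bt k (ys j)) * bt k z)" by (simp add: sum_distrib_right)
  also have "\<dots> = (\<Sum>k\<in>G. if k \<in> G0 then u k * bt k z else 0)"
    by (rule sum.cong) (auto simp: gal_bt)
  also have "\<dots> = (\<Sum>k\<in>G0. u k * bt k z)" by (rule sum_G0)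
  also have "\<dots> = (\<Sum>k\<in>G0. z * u k)"
  proof (rule sum.cong)
    fix k assume k: "k \<in> G0"
    have "u k * bt k z = u k * (z * u k)" using bt_G0[OF k] by simp
    also have "\<dots> = z * u k" using u_l[OF G0_G[OF k] id_in(2)[OF G0_G[OF k] u_E[OF G0_G[OF k]]]] .
    finally show "u k * bt k z = z * u k" .
  qed simp
  also have "\<dots> = z" by (rule sum_G0_u)
  finally show ?thesis .
qed

lemma inner2: "k \<in> G \<Longrightarrow> (\<Sum>i<m. bt k (xs i) * ys i) = (if k \<in> G0 then u k else 0)"
proof -
  assume k: "k \<in> G"
  have "(\<Sum>i<m. bt k (xs i) * ys i) = (\<Sum>i<m. bt k (xs i * bt (iv k) (ys i)))"
  proof (rule sum.cong)
    fix i
    have "bt k (xs i) * ys i = bt k (xs i) * u k * ys i" using u_r[OF k bt_E[OF k]] by simp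
    also have "\<dots> = bt k (xs i) * (ys i * u k)" using u_central[OF k, of "ys i"] by (simp add: mult.assoc)
    also have "\<dots> = bt k (xs i * bt (iv k) (ys i))" using bt_inv[OF k] bt_mult[OF k] by simp
    finally show "bt k (xs i) * ys i = bt k (xs i * bt (iv k) (ys i))" .
  qed simp
  also have "\<dots> = bt k (\<Sum>i<m. xs i * bt (iv k) (ys i))" using bt_sum[OF k, symmetric] .
  also have "\<dots> = bt k (if iv k \<in> G0 then u (iv k) else 0)" using gal_bt[OF iv_G[OF k]] by simp
  also have "\<dots> = (if k \<in> G0 then u k else 0)"
  proof (cases "k \<in> G0")
    case True
    then show ?thesis using G0_props[OF True] bt_G0[OF True] u_idem[OF k] by simp
  next
    case False
    have "iv k \<notin> G0" using False G0_props(3) iv_iv[OF k] by metis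
    then show ?thesis using False bt_0[OF k] by simp
  qed
  finally show ?thesis .
qed

lemma D2: "(\<Sum>i<m. tr (w * xs i) * ys i) = w"
proof -
  have "(\<Sum>i<m. tr (w * xs i) * ys i) = (\<Sum>i<m. \<Sum>k\<in>G. bt k w * (bt k (xs i) * ys i))"
    unfolding tr_def by (simp add: sum_distrib_right bt_mult mult.assoc)
  also have "\<dots> = (\<Sum>k\<in>G. \<Sum>i<m. bt k w * (bt k (xs i) * ys i))" by (rule sum.swap)
  also have "\<dots> = (\<Sum>k\<in>G. bt k w * (\<Sum>i<m. bt k (xs i) * ys i))" by (simp add: sum_distrib_left)
  also have "\<dots> = (\<Sum>k\<in>G. if k \<in> G0 then bt k w * u k else 0)"
    by (rule sum.cong) (auto simp: inner2)
  also have "\<dots> = (\<Sum>k\<in>G0. bt k w * u k)" by (rule sum_G0)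
  also have "\<dots> = (\<Sum>k\<in>G0. w * u k)"
    by (rule sum.cong) (auto simp: bt_G0 mult.assoc u_idem G0_G)
  also have "\<dots> = w" by (rule sum_G0_u)
  finally show ?thesis .
qed


abbreviation J where "J \<equiv> Jset iv E u beta"
abbreviation S where "S \<equiv> fixed_ring G iv u beta"

lemma J_iff: "r \<in> J g \<longleftrightarrow> r \<in> E g \<and> (\<forall>x. r * bt g x = x * r)"
  unfolding Jset_def bt_def by simp

lemma J_0: "g \<in> G \<Longrightarrow> 0 \<in> J g" using id_in(5) by (simp add: J_iff)
lemma J_add: "g \<in> G \<Longrightarrow> a \<in> J g \<Longrightarrow> b \<in> J g \<Longrightarrow> a + b \<in> J g"
  by (simp add: J_iff id_in(3) distrib_left distrib_right)
lemma J_neg: "g \<in> G \<Longrightarrow> a \<in> J g \<Longrightarrow> - a \<in> J g"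
  by (simp add: J_iff id_in(4))

lemma J_mult: assumes g: "g \<in> G" and h: "h \<in> G" and gh: "dm g = rn h"
  and a: "a \<in> J h" and b: "b \<in> J g" shows "a * b \<in> J (mul g h)"
proof -
  have "E (mul g h) = E g" using E_rn[OF mul_G[OF g h gh]] rn_mul[OF g h gh] E_rn[OF g] by simp
  hence 1: "a * b \<in> E (mul g h)" using b id_in(2)[OF g] by (simp add: J_iff)
  have "x * (a * b) = a * b * bt (mul g h) x" for x
  proof -
    have "x * (a * b) = a * (bt h x * b)" using a by (simp add: J_iff mult.assoc[symmetric])
    also have "bt h x * b = b * bt (mul g h) x"
    proof -
      have "b * bt g (bt h x) = bt h x * b" using b by (simp add: J_iff)
      thus ?thesis using bt_comp[OF g h gh] by simp
    qed
    finally show ?thesis by (simp add: mult.assoc)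
  qed
  thus ?thesis using 1 by (simp add: J_iff)
qed

lemma set_prod_J: assumes g: "g \<in> G" and h: "h \<in> G" and gh: "dm g = rn h"
  shows "set_prod (J h) (J g) \<subseteq> J (mul g h)"
proof
  fix x assume "x \<in> set_prod (J h) (J g)"
  thus "x \<in> J (mul g h)"
    by induction (auto intro: J_0 J_add J_neg J_mult mul_G g h gh)
qed

lemma set_prod_sum: "(\<And>j. j \<in> A \<Longrightarrow> f j \<in> set_prod X Y) \<Longrightarrow> sum f A \<in> set_prod X Y"
  by (induction A rule: infinite_finite_induct) (auto intro: set_prod.intros)

end

context gal begin

definition Q where "Q g c = (\<Sum>i<m. xs i * c * bt (iv g) (ys i))"

lemma bt_S': "g \<in> G \<Longrightarrow> s \<in> S \<Longrightarrow> bt g (s * y) = s * bt g y"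
proof -
  assume g: "g \<in> G" and s: "s \<in> S"
  have "bt g (s * y) = s * (u g * bt g y)" using bt_mult[OF g] bt_S[OF g s] by (simp add: mult.assoc)
  thus ?thesis using u_l[OF g bt_E[OF g]] by simp
qed

lemma Q_J: assumes g: "g \<in> G" and c: "\<forall>s\<in>S. s * c = c * s" shows "Q g c \<in> J (iv g)"
proof -
  have ig: "iv g \<in> G" using iv_G[OF g] .
  have 1: "Q g c \<in> E (iv g)" unfolding Q_def
    by (rule id_sum[OF ig]) (rule id_in(2)[OF ig bt_E[OF ig]])
  have "x * Q g c = Q g c * bt (iv g) x" for x
  proof -
    let ?b = "bt (iv g)"
    have "x * Q g c = (\<Sum>i<m. (x * xs i) * c * ?b (ys i))"
      unfolding Q_def by (simp add: sum_distrib_left mult.assoc)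
    also have "\<dots> = (\<Sum>i<m. (\<Sum>j<m. xs j * tr (ys j * (x * xs i))) * c * ?b (ys i))"
      using D1 by simp
    also have "\<dots> = (\<Sum>i<m. \<Sum>j<m. xs j * c * ?b (tr (ys j * x * xs i) * ys i))"
    proof (rule sum.cong[OF HOL.refl])
      fix i
      show "(\<Sum>j<m. xs j * tr (ys j * (x * xs i))) * c * ?b (ys i) =
            (\<Sum>j<m. xs j * c * ?b (tr (ys j * x * xs i) * ys i))"
        unfolding sum_distrib_right
      proof (rule sum.cong[OF HOL.refl])
        fix j
        have t: "tr (ys j * x * xs i) \<in> S" by (rule tr_S)
        have "xs j * tr (ys j * (x * xs i)) * c * ?b (ys i) = xs j * (tr (ys j * x * xs i) * c) * ?b (ys i)"
          by (simp add: mult.assoc)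
        also have "\<dots> = xs j * c * (tr (ys j * x * xs i) * ?b (ys i))"
          using c t by (simp add: mult.assoc)
        also have "\<dots> = xs j * c * ?b (tr (ys j * x * xs i) * ys i)" using bt_S'[OF ig t] by simp
        finally show "xs j * tr (ys j * (x * xs i)) * c * ?b (ys i) = xs j * c * ?b (tr (ys j * x * xs i) * ys i)" .
      qed
    qed
    also have "\<dots> = (\<Sum>j<m. \<Sum>i<m. xs j * c * ?b (tr (ys j * x * xs i) * ys i))" by (rule sum.swap)
    also have "\<dots> = (\<Sum>j<m. xs j * c * ?b (\<Sum>i<m. tr (ys j * x * xs i) * ys i))"
      by (simp add: bt_sum[OF ig] sum_distrib_left)
    also have "\<dots> = (\<Sum>j<m. xs j * c * ?b (ys j * x))" using D2 by simp
    also have "\<dots> = Q g c * ?b x" unfolding Q_def by (simp add: bt_mult[OF ig] sum_distrib_right mult.assoc)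
    finally show ?thesis .
  qed
  thus ?thesis using 1 by (simp add: J_iff)
qed

lemma Q_r: assumes g: "g \<in> G" and r: "r \<in> J g" shows "Q g c * r = (\<Sum>i<m. xs i * c * r * ys i)"
proof -
  have "bt (iv g) (ys i) * r = r * ys i" for i
  proof -
    have "bt (iv g) (ys i) * r = r * bt g (bt (iv g) (ys i))" using r by (simp add: J_iff)
    also have "\<dots> = r * ys i * u g" using bt_inv[OF g] by (simp add: mult.assoc)
    also have "\<dots> = r * ys i" using u_r[OF g id_in(1)[OF g]] r by (simp add: J_iff)
    finally show ?thesis .
  qed
  thus ?thesis unfolding Q_def by (simp add: sum_distrib_right mult.assoc)
qed

lemma xy_u: "g \<in> G \<Longrightarrow> (\<Sum>i<m. xs i * ys i) * u g = u g"
proof -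
  assume g: "g \<in> G"
  have e: "rn g \<in> G0" using rn_G0[OF g] .
  have "(\<Sum>i<m. xs i * bt (rn g) (ys i)) = u (rn g)" using gal_bt[OF G0_G[OF e]] e by simp
  thus ?thesis using bt_G0[OF e] u_rn[OF g] by (simp add: sum_distrib_right mult.assoc)
qed

lemma core_from: assumes g: "g \<in> G" and fn: "finite A"
  and cs: "\<And>j. j \<in> A \<Longrightarrow> \<forall>s\<in>S. s * c j = c j * s"
  and rs: "\<And>j. j \<in> A \<Longrightarrow> r j \<in> J g"
  and sm: "(\<Sum>j\<in>A. c j * r j) = u g"
  shows "u g \<in> set_prod (J (iv g)) (J g)"
proof -
  have "(\<Sum>j\<in>A. Q g (c j) * r j) = (\<Sum>j\<in>A. \<Sum>i<m. xs i * (c j * r j) * ys i)"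
    using Q_r[OF g rs] by (simp add: mult.assoc)
  also have "\<dots> = (\<Sum>i<m. xs i * (\<Sum>j\<in>A. c j * r j) * ys i)"
    by (simp add: sum.swap[of _ A] sum_distrib_left sum_distrib_right)
  also have "\<dots> = (\<Sum>i<m. xs i * u g * ys i)" using sm by simp
  also have "\<dots> = (\<Sum>i<m. xs i * ys i) * u g"
    by (simp add: sum_distrib_right mult.assoc u_central[OF g, symmetric])
  also have "\<dots> = u g" using xy_u[OF g] .
  finally have "u g = (\<Sum>j\<in>A. Q g (c j) * r j)" by simp
  also have "\<dots> \<in> set_prod (J (iv g)) (J g)"
    by (rule set_prod_sum) (rule set_prod.prod[OF Q_J[OF g cs] rs])
  finally show ?thesis .
qed

end


locale hs = gal G mul iv E u beta m xs ys
  for G :: "'g set" and mul iv and E :: "'g \<Rightarrow> ('r::ring_1) set" and u beta m xs ys +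
  fixes n :: nat and Phi :: "('r \<times> 'r) list \<Rightarrow> nat \<Rightarrow> 'r" and Psi :: "(nat \<Rightarrow> 'r) \<Rightarrow> ('r \<times> 'r) list"
  assumes H1: "\<forall>p q. tens_eq (fixed_ring G iv u beta) p q \<longrightarrow> Phi p = Phi q"
    and H2: "\<forall>p. vec_in n (Phi p)"
    and H4: "\<forall>a p. Phi (tens_lact a p) = (\<lambda>i. a * Phi p i)"
    and H5: "\<forall>b p. Phi (tens_ract p b) = (\<lambda>i. Phi p i * b)"
    and H6: "\<forall>v w. vec_in n v \<longrightarrow> vec_in n w \<longrightarrow>
          tens_eq (fixed_ring G iv u beta) (Psi (\<lambda>i. v i + w i)) (Psi v @ Psi w)"
    and H7: "\<forall>a v. vec_in n v \<longrightarrow> tens_eq (fixed_ring G iv u beta) (Psi (\<lambda>i. a * v i)) (tens_lact a (Psi v))"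
    and H8: "\<forall>b v. vec_in n v \<longrightarrow> tens_eq (fixed_ring G iv u beta) (Psi (\<lambda>i. v i * b)) (tens_ract (Psi v) b)"
    and H9: "\<forall>p. tens_eq (fixed_ring G iv u beta) (Psi (Phi p)) p"
begin

definition pi where "pi g p = sum_list (map (\<lambda>(a, b). a * bt g b) p)"

lemma pi_append: "pi g (p @ q) = pi g p + pi g q"
  unfolding pi_def by simp

lemma pi_lact: "pi g (tens_lact a p) = a * pi g p"
  unfolding pi_def tens_lact_def
  by (induction p) (auto simp: distrib_left mult.assoc)

lemma pi_ract: "g \<in> G \<Longrightarrow> pi g (tens_ract p b) = pi g p * bt g b"
  unfolding pi_def tens_ract_def
  by (induction p) (auto simp: distrib_right mult.assoc bt_mult)

lemma pi_E: "g \<in> G \<Longrightarrow> pi g p \<in> E g"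
  unfolding pi_def
  by (induction p) (auto intro!: id_in(2,3,5) bt_E)

lemma pi_tens: assumes g: "g \<in> G" shows "tens_eq S p q \<Longrightarrow> pi g p = pi g q"
proof (induction rule: tens_eq.induct)
  case (cong xs ys us vs)
  then show ?case by (simp add: pi_append)
next
  case (comm p q)
  then show ?case by (simp add: pi_def add.commute)
next
  case (addl x x' y)
  then show ?case by (simp add: pi_def distrib_right)
next
  case (addr x y y')
  then show ?case by (simp add: pi_def distrib_left bt_add[OF g])
next
  case (bal s x y)
  have "x * s * bt g y = x * bt g (s * y)" using bt_S'[OF g bal] by (simp add: mult.assoc)
  then show ?case by (simp add: pi_def)
qed (simp_all add: pi_def)

lemma PA: "g \<in> G \<Longrightarrow> vec_in n v \<Longrightarrow> vec_in n w \<Longrightarrow>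
    pi g (Psi (\<lambda>i. v i + w i)) = pi g (Psi v) + pi g (Psi w)"
  using pi_tens H6 pi_append by metis

lemma PL: "g \<in> G \<Longrightarrow> vec_in n v \<Longrightarrow> pi g (Psi (\<lambda>i. a * v i)) = a * pi g (Psi v)"
  using pi_tens H7 pi_lact by metis

lemma PR: "g \<in> G \<Longrightarrow> vec_in n v \<Longrightarrow> pi g (Psi (\<lambda>i. v i * b)) = pi g (Psi v) * bt g b"
  using pi_tens H8 pi_ract by metis

lemma PP: "g \<in> G \<Longrightarrow> pi g (Psi (Phi p)) = pi g p"
  using pi_tens H9 by metis

definition dl where "dl j = (\<lambda>i. if i = j then (1::'r) else 0)"

lemma dl_vec: "j < n \<Longrightarrow> vec_in n (dl j)"
  unfolding vec_in_def dl_def by auto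

lemma decomp_k: assumes g: "g \<in> G" and v: "vec_in n v"
  shows "k \<le> n \<Longrightarrow> pi g (Psi (\<lambda>i. if i < k then v i else 0)) = (\<Sum>j<k. v j * pi g (Psi (dl j)))"
proof (induction k)
  case 0
  have z: "vec_in n (\<lambda>i. 0::'r)" by (simp add: vec_in_def)
  have "pi g (Psi (\<lambda>i. 0 * (0::'r))) = 0 * pi g (Psi (\<lambda>i. 0))" using PL[OF g z] .
  then show ?case by simp
next
  case (Suc k)
  hence k: "k < n" by simp
  have vk: "vec_in n (\<lambda>i. if i < k then v i else 0)" using v k unfolding vec_in_def by auto
  have dk: "vec_in n (\<lambda>i. v k * dl k i)" using dl_vec[OF k] unfolding vec_in_def by simp
  have eq: "(\<lambda>i. if i < Suc k then v i else 0) = (\<lambda>i. (if i < k then v i else 0) + v k * dl k i)"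
    by (rule ext) (auto simp: dl_def less_Suc_eq)
  have "pi g (Psi (\<lambda>i. if i < Suc k then v i else 0))
      = pi g (Psi (\<lambda>i. if i < k then v i else 0)) + pi g (Psi (\<lambda>i. v k * dl k i))"
    unfolding eq using PA[OF g vk dk] .
  also have "pi g (Psi (\<lambda>i. v k * dl k i)) = v k * pi g (Psi (dl k))" using PL[OF g dl_vec[OF k]] .
  finally show ?case using Suc by simp
qed

lemma decomp: assumes g: "g \<in> G" and v: "vec_in n v"
  shows "pi g (Psi v) = (\<Sum>j<n. v j * pi g (Psi (dl j)))"
proof -
  have "(\<lambda>i. if i < n then v i else 0) = v" using v unfolding vec_in_def by auto
  thus ?thesis using decomp_k[OF g v order_refl] by simp
qed

lemma r_J: assumes g: "g \<in> G" and j: "j < n" shows "pi g (Psi (dl j)) \<in> J g"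
proof -
  have "x * pi g (Psi (dl j)) = pi g (Psi (dl j)) * bt g x" for x
  proof -
    have "(\<lambda>i. x * dl j i) = (\<lambda>i. dl j i * x)" by (auto simp: dl_def)
    thus ?thesis using PL[OF g dl_vec[OF j], of x] PR[OF g dl_vec[OF j], of x] by simp
  qed
  thus ?thesis using pi_E[OF g] by (simp add: J_iff)
qed

lemma c_S: "\<forall>s\<in>S. s * Phi [(1,1)] j = Phi [(1,1)] j * s"
proof
  fix s assume s: "s \<in> S"
  have "Phi [(s, 1)] = Phi [(1, s)]" using H1 tens_eq.bal[OF s, of 1 1] by simp
  moreover have "Phi (tens_lact s [(1,1)]) = (\<lambda>i. s * Phi [(1,1)] i)" using H4 by blast
  moreover have "Phi (tens_ract [(1,1)] s) = (\<lambda>i. Phi [(1,1)] i * s)" using H5 by blast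
  ultimately show "s * Phi [(1,1)] j = Phi [(1,1)] j * s"
    by (simp add: tens_lact_def tens_ract_def) metis
qed

lemma core: assumes g: "g \<in> G" shows "u g \<in> set_prod (J (iv g)) (J g)"
proof (rule core_from[OF g, of "{..<n}" "\<lambda>j. Phi [(1,1)] j" "\<lambda>j. pi g (Psi (dl j))"])
  show "(\<Sum>j<n. Phi [(1, 1)] j * pi g (Psi (dl j))) = u g"
    using decomp[OF g H2[rule_format]] PP[OF g] bt_1[OF g] by (simp add: pi_def)
qed (use c_S r_J g in auto)


lemma sp_E: assumes a: "a \<in> G" shows "y \<in> set_prod (J a) X \<Longrightarrow> y \<in> E a"
  by (induction rule: set_prod.induct) (auto intro: id_in[OF a] simp: J_iff)

lemma u_iv_eq: assumes g: "g \<in> G" shows "u (iv g) = u g"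
proof -
  have "u g \<in> E (iv g)" using core[OF g] sp_E[OF iv_G[OF g]] by blast
  hence 1: "u (iv g) * u g = u g" using u_l[OF iv_G[OF g]] by blast
  have "u (iv g) \<in> E g" using core[OF iv_G[OF g]] sp_E[OF iv_G[OF iv_G[OF g]]] iv_iv[OF g] by auto
  hence 2: "u g * u (iv g) = u (iv g)" using u_l[OF g] by blast
  show ?thesis using 1 2 u_central[OF g, of "u (iv g)"] by simp
qed

lemma main1: assumes g: "g \<in> G" and h: "h \<in> G" and gh: "dm g = rn h"
  shows "set_prod (J h) (J g) = J (mul g h)"
proof
  show "set_prod (J h) (J g) \<subseteq> J (mul g h)" by (rule set_prod_J[OF g h gh])
next
  show "J (mul g h) \<subseteq> set_prod (J h) (J g)"
  proof
    fix c assume c: "c \<in> J (mul g h)"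
    have gh': "mul g h \<in> G" using mul_G[OF g h gh] .
    have c2: "dm (mul g h) = rn (iv h)" using dm_mul[OF g h gh] rn_iv[OF h] by simp
    have mm: "mul (mul g h) (iv h) = g"
    proof -
      have "mul (mul g h) (iv h) = mul g (mul h (iv h))"
        using assoc[OF g h iv_G[OF h] gh] rn_iv[OF h] by simp
      also have "\<dots> = g" using rid[OF g] gh by (simp add: gran_def)
      finally show ?thesis .
    qed
    have "y \<in> set_prod (J h) (J (iv h)) \<Longrightarrow> y * c \<in> set_prod (J h) (J g)" for y
    proof (induction rule: set_prod.induct)
      case zero
      then show ?case by (simp add: set_prod.zero)
    next
      case (prod a b)
      have "b * c \<in> J g" using J_mult[OF gh' iv_G[OF h] c2 prod(2) c] mm by simp
      then show ?case using set_prod.prod[OF prod(1)] by (simp add: mult.assoc)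
    next
      case (add x y)
      then show ?case by (simp add: distrib_right set_prod.add)
    next
      case (neg x)
      then show ?case by (simp add: set_prod.neg)
    qed
    hence "u (iv h) * c \<in> set_prod (J h) (J g)" using core[OF iv_G[OF h]] iv_iv[OF h] by simp
    moreover have "u (iv h) = u g"
      using u_iv_eq[OF h] u_rn[OF h] gh u_iv[OF g] u_iv_eq[OF g] by simp
    moreover have "c \<in> E g"
      using c E_rn[OF gh'] rn_mul[OF g h gh] E_rn[OF g] by (simp add: J_iff)
    ultimately show "c \<in> set_prod (J h) (J g)" using u_l[OF g] by simp
  qed
qed

lemma main2: assumes g: "g \<in> G"
  shows "set_prod (J (iv g)) (J g) = {r\<in>E g. \<forall>x. r * x = x * r}"
proof -
  have "set_prod (J (iv g)) (J g) = J (mul g (iv g))"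
    using main1[OF g iv_G[OF g]] rn_iv[OF g] by simp
  also have "mul g (iv g) = rn g" by (simp add: gran_def)
  also have "J (rn g) = {r\<in>E g. \<forall>x. r * x = x * r}"
  proof -
    have e: "rn g \<in> G0" using rn_G0[OF g] .
    have "r * (x * u (rn g)) = r * x" if "r \<in> E g" for r x
      using u_r[OF G0_G[OF e]] id_in(1)[OF g that] E_rn[OF g] u_rn[OF g] by (simp add: mult.assoc[symmetric])
    hence key: "r * bt (rn g) x = r * x" if "r \<in> E g" for r x using bt_G0[OF e] that by simp
    have "r \<in> J (rn g) \<longleftrightarrow> r \<in> E g \<and> (\<forall>x. r * x = x * r)" for r
    proof (cases "r \<in> E g")
      case True
      then show ?thesis using key[OF True] E_rn[OF g] by (simp add: J_iff)
    next
      case False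
      then show ?thesis using E_rn[OF g] by (simp add: J_iff)
    qed
    thus ?thesis by blast
  qed
  finally show ?thesis .
qed

lemma main3: assumes g: "g \<in> G" shows "J g \<noteq> {0}"
proof
  assume J0: "J g = {0}"
  have "y \<in> set_prod (J (iv g)) (J g) \<Longrightarrow> y = 0" for y
    by (induction rule: set_prod.induct) (use J0 in auto)
  hence "u g = 0" using core[OF g] by blast
  thus False using unz g by blast
qed

end

theorem lemma3p4:
  fixes G :: "'g set" and mul :: "'g \<Rightarrow> 'g \<Rightarrow> 'g" and iv :: "'g \<Rightarrow> 'g"
    and E :: "'g \<Rightarrow> ('r::ring_1) set" and u :: "'g \<Rightarrow> 'r" and beta :: "'g \<Rightarrow> 'r \<Rightarrow> 'r"
  assumes "groupoid G mul iv" and "finite G"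
    and "unital_action G mul iv E u beta"
    and "\<forall>g\<in>G. u g \<noteq> 0"
    and "beta_galois G mul iv u beta"
    and "hirata_separable (fixed_ring G iv u beta)"
  shows "(\<forall>g\<in>G. \<forall>h\<in>G. gdom mul iv g = gran mul iv h \<longrightarrow>
            set_prod (Jset iv E u beta h) (Jset iv E u beta g) = Jset iv E u beta (mul g h))
       \<and> (\<forall>g\<in>G. set_prod (Jset iv E u beta (iv g)) (Jset iv E u beta g)
                  = {r\<in>E g. \<forall>x. r * x = x * r})
       \<and> (\<forall>g\<in>G. Jset iv E u beta g \<noteq> {0})"
proof -
  obtain m :: nat and xs ys :: "nat \<Rightarrow> 'r" where gal: "\<forall>g\<in>G. (\<Sum>i<m. xs i * beta g (ys i * u (iv g))) =
      (if g \<in> gidents G mul iv then u g else 0)"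
    using assms(5) unfolding beta_galois_def by (elim exE) (erule that)
  obtain n Phi Psi where H:
       "(\<forall>p q. tens_eq (fixed_ring G iv u beta) p q \<longrightarrow> Phi p = Phi q) \<and>
       (\<forall>p. vec_in n (Phi p)) \<and>
       (\<forall>p q. Phi (p @ q) = (\<lambda>i. Phi p i + Phi q i)) \<and>
       (\<forall>a p. Phi (tens_lact a p) = (\<lambda>i. a * Phi p i)) \<and>
       (\<forall>b p. Phi (tens_ract p b) = (\<lambda>i. Phi p i * b)) \<and>
       (\<forall>v w. vec_in n v \<longrightarrow> vec_in n w \<longrightarrow>
          tens_eq (fixed_ring G iv u beta) (Psi (\<lambda>i. v i + w i)) (Psi v @ Psi w)) \<and>
       (\<forall>a v. vec_in n v \<longrightarrow> tens_eq (fixed_ring G iv u beta) (Psi (\<lambda>i. a * v i)) (tens_lact a (Psi v))) \<and>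
       (\<forall>b v. vec_in n v \<longrightarrow> tens_eq (fixed_ring G iv u beta) (Psi (\<lambda>i. v i * b)) (tens_ract (Psi v) b)) \<and>
       (\<forall>p. tens_eq (fixed_ring G iv u beta) (Psi (Phi p)) p)"
    using assms(6) unfolding hirata_separable_def by (elim exE) (erule that)
  interpret hs G mul iv E u beta m xs ys n Phi Psi
  proof (unfold_locales)
    show "groupoid G mul iv" "finite G" "unital_action G mul iv E u beta" "\<forall>g\<in>G. u g \<noteq> 0"
      using assms by simp_all
    show "\<forall>g\<in>G. (\<Sum>i<m. xs i * beta g (ys i * u (iv g))) = (if g \<in> gidents G mul iv then u g else 0)"
      by (rule gal)
  qed (use H in blast)+
  show ?thesis using main1 main2 main3 by blast
qed

end
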